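(* Let $K\ge d>0$ and $T\ge2$. Let $s=(s_t)_{1\le t\le T}$ be a $d$-dimensional Markov chain with $s_1\sim\mathcal{N}(m,\Phi)$ and, conditionally on $s_t$, $s_{t+1}\sim\mathcal{N}(Bs_t+b,\Psi)$, where $B$ is diagonal with non-zero pairwise distinct diagonal entries, $\Phi,\Psi$ are diagonal with positive diagonal entries, and $m,b\in\mathbb{R}^d$. Let $w_t=\Gamma s_t$ with $\Gamma\in\mathbb{R}^{K\times d}$ of rank $d$. Let $(\tilde w,\tilde s)$ be built similarly with parameters $\tilde m,\tilde\Phi,\tilde B,\tilde b,\tilde\Psi$ (with $\tilde B,\tilde\Phi,\tilde\Psi$ diagonal with non-zero diagonal entries, $\tilde \Phi,\tilde\Psi$ positive) and $\tilde\Gamma$ of rank $d$. If $w=(w_t)_{1\le t\le T}$ and $\tilde w$ have the same distribution, then there exist a permutation matrix $P\in\mathbb{R}^{d\times d}$ and an invertible diagonal matrix $D$ such that $\tilde\Gamma=\Gamma PD^{-1}$, $\tilde B=DP^\top BPD^{-1}$, $\tilde\Phi=DP^\top\Phi PD$, $\tilde\Psi=DP^\top\Psi PD$, $\tilde b=DP^\top b$, $\tilde m=DP^\top m$.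
   Context: $\mathcal{N}(\mu,\Sigma)$ denotes the Gaussian distribution with mean $\mu$ and covariance $\Sigma$. *)

theory Defs
  imports "HOL-Analysis.Analysis" "HOL-Probability.Probability"
begin

definition mvn_density :: "real^'d \<Rightarrow> real^'d^'d \<Rightarrow> real^'d \<Rightarrow> real" where
  "mvn_density \<mu> \<Sigma> x =
     exp (- (1/2) * ((x - \<mu>) \<bullet> (matrix_inv \<Sigma> *v (x - \<mu>))))
     / sqrt ((2 * pi) ^ CARD('d) * det \<Sigma>)"

definition state_law :: "nat \<Rightarrow> real^'d \<Rightarrow> real^'d^'d \<Rightarrow> real^'d^'d \<Rightarrow> real^'d \<Rightarrow> real^'d^'d
    \<Rightarrow> (nat \<Rightarrow> real^'d) measure" where
  "state_law T m \<Phi> B b \<Psi> =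
     density (PiM {1..T} (\<lambda>_. lborel))
       (\<lambda>s. ennreal (mvn_density m \<Phi> (s 1) *
                      (\<Prod>t\<in>{1..<T}. mvn_density (B *v s t + b) \<Psi> (s (Suc t)))))"

definition obs_law :: "nat \<Rightarrow> real^'d^'k \<Rightarrow> real^'d \<Rightarrow> real^'d^'d \<Rightarrow> real^'d^'d \<Rightarrow> real^'d
    \<Rightarrow> real^'d^'d \<Rightarrow> (nat \<Rightarrow> real^'k) measure" where
  "obs_law T \<Gamma> m \<Phi> B b \<Psi> =
     distr (state_law T m \<Phi> B b \<Psi>) (PiM {1..T} (\<lambda>_. borel)) (\<lambda>s. \<lambda>t\<in>{1..T}. \<Gamma> *v s t)"

definition diag_mat :: "real^'d^'d \<Rightarrow> bool" where
  "diag_mat A \<longleftrightarrow> (\<forall>i j. i \<noteq> j \<longrightarrow> A $ i $ j = 0)"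

definition perm_mat :: "real^'d^'d \<Rightarrow> bool" where
  "perm_mat P \<longleftrightarrow> (\<exists>p. p permutes (UNIV :: 'd set) \<and> P = (\<chi> i j. if i = p j then 1 else 0))"

end

theory Submission
  imports Defs
begin


lemma matrix_inv_eq:
  fixes A :: "real^'n^'n"
  assumes "A ** A' = mat 1" "A' ** A = mat 1"
  shows "matrix_inv A = A'"
proof -
  have ex: "\<exists>M::real^'n^'n. A ** M = mat 1 \<and> M ** A = mat 1" using assms by blast
  define M where "M = matrix_inv A"
  have M: "A ** M = mat 1 \<and> M ** A = mat 1"
    unfolding M_def matrix_inv_def by (rule someI_ex[OF ex])
  have "M = M ** (A ** A')" using assms by (simp add: matrix_mul_rid)
  also have "\<dots> = A'" using M by (simp add: matrix_mul_assoc matrix_mul_lid)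
  finally show ?thesis by (simp add: M_def)
qed

lemma diag_inv:
  fixes A :: "real^'n^'n"
  assumes "diag_mat A" "\<forall>i. A $ i $ i \<noteq> 0"
  shows "matrix_inv A = (\<chi> i j. if i = j then 1 / A $ i $ i else 0)"
proof (rule matrix_inv_eq)
  have d: "\<And>i j. i \<noteq> j \<Longrightarrow> A $ i $ j = 0" using assms(1) by (simp add: diag_mat_def)
  show "A ** (\<chi> i j. if i = j then 1 / A $ i $ i else 0) = mat 1"
    using assms(2) by (auto simp: matrix_matrix_mult_def mat_def vec_eq_iff d if_distrib[of "\<lambda>z. _ * z"] cong: if_cong)
  show "(\<chi> i j. if i = j then 1 / A $ i $ i else 0) ** A = mat 1"
    using assms(2) by (auto simp: matrix_matrix_mult_def mat_def vec_eq_iff d if_distrib[of "\<lambda>z. z * _"] cong: if_cong)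
qed

lemma sqrt_prod: "finite A \<Longrightarrow> sqrt (prod f A) = (\<Prod>i\<in>A. sqrt (f i))"
  by (induct rule: finite_induct) (simp_all add: real_sqrt_mult)

lemma mvn_diag:
  fixes \<Sigma> :: "real^'d^'d"
  assumes "diag_mat \<Sigma>" "\<forall>i. \<Sigma> $ i $ i > 0"
  shows "mvn_density \<mu> \<Sigma> x = (\<Prod>i\<in>UNIV. normal_density (\<mu>$i) (sqrt (\<Sigma>$i$i)) (x$i))"
proof -
  have d: "\<And>i j. i \<noteq> j \<Longrightarrow> \<Sigma> $ i $ j = 0" using assms(1) by (simp add: diag_mat_def)
  have nz: "\<forall>i. \<Sigma> $ i $ i \<noteq> 0" using assms(2) by (metis less_irrefl)
  have q: "(x - \<mu>) \<bullet> (matrix_inv \<Sigma> *v (x - \<mu>)) = (\<Sum>i\<in>UNIV. (x$i - \<mu>$i)^2 / \<Sigma>$i$i)"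
    by (simp add: diag_inv[OF assms(1) nz] inner_vec_def matrix_vector_mult_def if_distrib[of "\<lambda>z. z * _"] power2_eq_square cong: if_cong)
  have dt: "det \<Sigma> = (\<Prod>i\<in>UNIV. \<Sigma>$i$i)" by (rule det_diagonal) (simp add: d)
  have s: "sqrt ((2 * pi) ^ CARD('d) * det \<Sigma>) = (\<Prod>i\<in>UNIV. sqrt (2 * pi * (sqrt (\<Sigma>$i$i))\<^sup>2))"
  proof -
    have "(2 * pi) ^ CARD('d) * det \<Sigma> = (\<Prod>i\<in>UNIV. 2 * pi * (sqrt (\<Sigma>$i$i))\<^sup>2)"
      using assms(2) by (simp add: dt prod.distrib less_imp_le)
    then show ?thesis by (simp add: sqrt_prod)
  qed
  have e: "exp (- (1/2) * (\<Sum>i\<in>UNIV. (x$i - \<mu>$i)^2 / \<Sigma>$i$i)) = (\<Prod>i\<in>UNIV. exp (-(x$i - \<mu>$i)\<^sup>2/ (2 * (sqrt (\<Sigma>$i$i))\<^sup>2)))"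
    using assms(2) by (simp add: sum_distrib_left exp_sum less_imp_le)
  show ?thesis
    unfolding mvn_density_def q s e normal_density_def
    by (simp add: prod.distrib prod_dividef)
qed

lemma normal_nn1:
  assumes "\<sigma> > 0"
  shows "(\<integral>\<^sup>+ t. ennreal (normal_density \<mu> \<sigma> t) \<partial>lborel) = 1"
  using assms by (subst nn_integral_eq_integral) (auto simp: integral_normal_density)

lemma normal_mgf:
  assumes "\<sigma> > 0"
  shows "(\<integral>\<^sup>+ t. ennreal (normal_density \<mu> \<sigma> t * exp (c * t)) \<partial>lborel) = ennreal (exp (c * \<mu> + \<sigma>\<^sup>2 * c\<^sup>2 / 2))"
proof -
  have pw: "normal_density \<mu> \<sigma> t * exp (c * t) = exp (c * \<mu> + \<sigma>\<^sup>2 * c\<^sup>2 / 2) * normal_density (\<mu> + \<sigma>\<^sup>2 * c) \<sigma> t" for t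
  proof -
    have "-(t - \<mu>)\<^sup>2/ (2 * \<sigma>\<^sup>2) + c * t = (c * \<mu> + \<sigma>\<^sup>2 * c\<^sup>2 / 2) + (-(t - (\<mu> + \<sigma>\<^sup>2 * c))\<^sup>2/ (2 * \<sigma>\<^sup>2))"
      using assms by (simp add: field_simps power2_eq_square)
    then show ?thesis unfolding normal_density_def
      by (simp add: exp_add[symmetric] mult.assoc mult.left_commute[of "exp _"])
  qed
  have "(\<integral>\<^sup>+ t. ennreal (normal_density \<mu> \<sigma> t * exp (c * t)) \<partial>lborel)
      = (\<integral>\<^sup>+ t. ennreal (exp (c * \<mu> + \<sigma>\<^sup>2 * c\<^sup>2 / 2)) * ennreal (normal_density (\<mu> + \<sigma>\<^sup>2 * c) \<sigma> t) \<partial>lborel)"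
    by (simp add: pw ennreal_mult)
  also have "\<dots> = ennreal (exp (c * \<mu> + \<sigma>\<^sup>2 * c\<^sup>2 / 2)) * (\<integral>\<^sup>+ t. ennreal (normal_density (\<mu> + \<sigma>\<^sup>2 * c) \<sigma> t) \<partial>lborel)"
    by (rule nn_integral_cmult) simp
  also have "\<dots> = ennreal (exp (c * \<mu> + \<sigma>\<^sup>2 * c\<^sup>2 / 2))" using normal_nn1[OF assms] by simp
  finally show ?thesis .
qed

lemma nn_integral_vec_prod:
  fixes g :: "'d::finite \<Rightarrow> real \<Rightarrow> real"
  assumes [measurable]: "\<And>i. g i \<in> borel_measurable borel"
  assumes nn: "\<And>i t. 0 \<le> g i t"
  shows "(\<integral>\<^sup>+ x. ennreal (\<Prod>i\<in>UNIV. g i ((x::real^'d) $ i)) \<partial>lborel) = (\<Prod>i\<in>UNIV. \<integral>\<^sup>+ t. ennreal (g i t) \<partial>lborel)"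
proof -
  define f where "f b t = ennreal (g (axis_index b) t)" for b :: "real^'d" and t
  have pb: "(\<Prod>b\<in>Basis. h b) = (\<Prod>i\<in>UNIV. h (axis i (1::real)))" for h :: "real^'d \<Rightarrow> ennreal"
    by (simp add: Basis_vec_def UNION_singleton_eq_range prod.reindex axis_eq_axis inj_on_def)
  have "(\<integral>\<^sup>+x. (\<Prod>b\<in>Basis. f b (x \<bullet> b)) \<partial>lborel) = (\<Prod>b\<in>Basis. (\<integral>\<^sup>+x. f b x \<partial>lborel))"
    by (rule nn_integral_lborel_prod) (auto simp: f_def)
  moreover have "(\<Prod>b\<in>Basis. f b (x \<bullet> b)) = ennreal (\<Prod>i\<in>UNIV. g i ((x::real^'d) $ i))" for x
    by (simp add: pb f_def inner_axis prod_ennreal nn)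
  ultimately show ?thesis by (simp add: pb f_def)
qed

lemma mvn_mgf:
  fixes \<Sigma> :: "real^'d^'d"
  assumes "diag_mat \<Sigma>" "\<forall>i. \<Sigma> $ i $ i > 0"
  shows "(\<integral>\<^sup>+ x. ennreal (mvn_density \<mu> \<Sigma> x * exp (c \<bullet> x)) \<partial>lborel)
         = ennreal (exp (c \<bullet> \<mu> + (\<Sum>i\<in>UNIV. \<Sigma>$i$i * (c$i)\<^sup>2) / 2))"
proof -
  have pw: "mvn_density \<mu> \<Sigma> x * exp (c \<bullet> x) = (\<Prod>i\<in>UNIV. normal_density (\<mu>$i) (sqrt (\<Sigma>$i$i)) (x$i) * exp (c$i * x$i))" for x
    by (simp add: mvn_diag[OF assms] inner_vec_def exp_sum prod.distrib)
  have "(\<integral>\<^sup>+ x. ennreal (mvn_density \<mu> \<Sigma> x * exp (c \<bullet> x)) \<partial>lborel)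
     = (\<Prod>i\<in>UNIV. \<integral>\<^sup>+ t. ennreal (normal_density (\<mu>$i) (sqrt (\<Sigma>$i$i)) t * exp (c$i * t)) \<partial>lborel)"
    unfolding pw by (rule nn_integral_vec_prod) auto
  also have "\<dots> = (\<Prod>i\<in>UNIV. ennreal (exp (c$i * \<mu>$i + \<Sigma>$i$i * (c$i)\<^sup>2 / 2)))"
    using assms(2) by (simp add: normal_mgf less_imp_le)
  also have "\<dots> = ennreal (exp (c \<bullet> \<mu> + (\<Sum>i\<in>UNIV. \<Sigma>$i$i * (c$i)\<^sup>2) / 2))"
    by (simp add: prod_ennreal exp_sum[symmetric] inner_vec_def sum.distrib sum_divide_distrib)
  finally show ?thesis .
qed

lemma mvn_meas[measurable]:
  fixes f g :: "'a \<Rightarrow> real^'d"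
  assumes [measurable]: "f \<in> borel_measurable M" "g \<in> borel_measurable M"
  shows "(\<lambda>x. mvn_density (f x) \<Sigma> (g x)) \<in> borel_measurable M"
proof -
  have [measurable]: "(\<lambda>x. A *v x) \<in> borel_measurable borel" for A :: "real^'d^'d"
    by (intro borel_measurable_continuous_onI linear_continuous_on matrix_vector_mul_bounded_linear)
  show ?thesis unfolding mvn_density_def by measurable
qed

definition dens :: "nat \<Rightarrow> real^'d \<Rightarrow> real^'d^'d \<Rightarrow> real^'d^'d \<Rightarrow> real^'d \<Rightarrow> real^'d^'d \<Rightarrow> (nat \<Rightarrow> real^'d) \<Rightarrow> real" where
  "dens T m \<Phi> B b \<Psi> s = mvn_density m \<Phi> (s 1) * (\<Prod>t\<in>{1..<T}. mvn_density (B *v s t + b) \<Psi> (s (Suc t)))"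

lemma dens_meas:
  fixes m b :: "real^'d" and \<Phi> B \<Psi> :: "real^'d^'d"
  assumes "1 \<le> T"
  shows "dens T m \<Phi> B b \<Psi> \<in> borel_measurable (PiM {1..T} (\<lambda>_. lborel))"
proof -
  have [measurable]: "(\<lambda>x. A *v x) \<in> borel_measurable borel" for A :: "real^'d^'d"
    by (intro borel_measurable_continuous_onI linear_continuous_on matrix_vector_mul_bounded_linear)
  have c[measurable]: "(\<lambda>s. s t) \<in> borel_measurable (PiM {1..T} (\<lambda>_. lborel :: (real^'d) measure))" if "t \<in> {1..T}" for t
    using measurable_component_singleton[OF that, of "\<lambda>_. lborel :: (real^'d) measure"] by simp
  have "(\<lambda>s. \<Prod>t\<in>{1..<T}. mvn_density (B *v s t + b) \<Psi> (s (Suc t))) \<in> borel_measurable (PiM {1..T} (\<lambda>_. lborel))"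
  proof (rule borel_measurable_prod)
    fix t assume t: "t \<in> {1..<T}"
    have [measurable]: "(\<lambda>s. s t) \<in> borel_measurable (PiM {1..T} (\<lambda>_. lborel :: (real^'d) measure))"
      by (rule c) (use t in auto)
    have [measurable]: "(\<lambda>s. s (Suc t)) \<in> borel_measurable (PiM {1..T} (\<lambda>_. lborel :: (real^'d) measure))"
      by (rule c) (use t in auto)
    show "(\<lambda>s. mvn_density (B *v s t + b) \<Psi> (s (Suc t))) \<in> borel_measurable (PiM {1..T} (\<lambda>_. lborel))"
      by measurable
  qed
  moreover have [measurable]: "(\<lambda>s. s 1) \<in> borel_measurable (PiM {1..T} (\<lambda>_. lborel :: (real^'d) measure))"
    by (rule c) (use assms in auto)
  ultimately show ?thesis unfolding dens_def[abs_def] by measurable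
qed

lemma inner_meas[measurable]: "(\<lambda>y::real^'d. c \<bullet> y) \<in> borel_measurable borel"
  by (intro borel_measurable_continuous_onI continuous_intros)

lemma mvn_nonneg:
  fixes \<Sigma> :: "real^'d^'d"
  assumes "diag_mat \<Sigma>" "\<forall>i. \<Sigma> $ i $ i > 0"
  shows "0 \<le> mvn_density \<mu> \<Sigma> x"
  by (simp add: mvn_diag[OF assms] prod_nonneg)

lemma mvn_int1:
  fixes \<Sigma> :: "real^'d^'d"
  assumes "diag_mat \<Sigma>" "\<forall>i. \<Sigma> $ i $ i > 0"
  shows "(\<integral>\<^sup>+ x. ennreal (mvn_density \<mu> \<Sigma> x) \<partial>lborel) = 1"
  using mvn_mgf[OF assms, of \<mu> 0] by simp

definition mgfQ :: "real^'d \<Rightarrow> real^'d^'d \<Rightarrow> real^'d^'d \<Rightarrow> real^'d \<Rightarrow> real^'d^'d \<Rightarrow> real^'d \<Rightarrow> real^'d \<Rightarrow> real" where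
  "mgfQ m \<Phi> B b \<Psi> a c = c \<bullet> b + (\<Sum>i\<in>UNIV. \<Psi>$i$i * (c$i)\<^sup>2) / 2 + (a + c v* B) \<bullet> m
      + (\<Sum>i\<in>UNIV. \<Phi>$i$i * ((a + c v* B)$i)\<^sup>2) / 2"

lemma comp_meas:
  assumes "t \<in> I"
  shows "(\<lambda>s. s t) \<in> borel_measurable (PiM I (\<lambda>_. lborel :: (real^'d) measure))"
  using measurable_component_singleton[OF assms, of "\<lambda>_. lborel :: (real^'d) measure"] by simp

lemma chain_mgf:
  fixes m b a c :: "real^'d" and \<Phi> B \<Psi> :: "real^'d^'d"
  assumes "diag_mat \<Phi>" "\<forall>i. \<Phi> $ i $ i > 0" "diag_mat \<Psi>" "\<forall>i. \<Psi> $ i $ i > 0"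
    and "2 \<le> T"
  shows "(\<integral>\<^sup>+ s. ennreal (dens T m \<Phi> B b \<Psi> s * exp (a \<bullet> s 1 + c \<bullet> s 2)) \<partial>PiM {1..T} (\<lambda>_. lborel))
     = ennreal (exp (mgfQ m \<Phi> B b \<Psi> a c))"
  using assms(5)
proof (induction T rule: dec_induct)
  interpret P: product_sigma_finite "(\<lambda>_. lborel) :: nat \<Rightarrow> (real^'d) measure"
    by standard
  case base
  have [measurable]: "(\<lambda>s. s 1) \<in> borel_measurable (PiM {1..2::nat} (\<lambda>_. lborel :: (real^'d) measure))"
     "(\<lambda>s. s 2) \<in> borel_measurable (PiM {1..2::nat} (\<lambda>_. lborel :: (real^'d) measure))"
    by (auto intro!: comp_meas)
  have dm[measurable]: "dens 2 m \<Phi> B b \<Psi> \<in> borel_measurable (PiM {1..2::nat} (\<lambda>_. lborel))"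
    by (rule dens_meas) simp
  have I: "{1..2::nat} = insert 2 {1}" by auto
  have mf: "(\<lambda>s. ennreal (dens 2 m \<Phi> B b \<Psi> s * exp (a \<bullet> s 1 + c \<bullet> s 2))) \<in> borel_measurable (PiM {1..2::nat} (\<lambda>_. lborel))"
    by measurable
  have "(\<integral>\<^sup>+ s. ennreal (dens 2 m \<Phi> B b \<Psi> s * exp (a \<bullet> s 1 + c \<bullet> s 2)) \<partial>PiM {1..2::nat} (\<lambda>_. lborel))
    = (\<integral>\<^sup>+ x. (\<integral>\<^sup>+ y. ennreal (dens 2 m \<Phi> B b \<Psi> (x(2:=y)) * exp (a \<bullet> (x(2:=y)) 1 + c \<bullet> (x(2:=y)) 2)) \<partial>lborel) \<partial>PiM {1::nat} (\<lambda>_. lborel))"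
    using mf unfolding I by (intro P.product_nn_integral_insert) auto
  also have "\<dots> = (\<integral>\<^sup>+ x. ennreal (mvn_density m \<Phi> (x 1) * exp (a \<bullet> x 1)) *
        (\<integral>\<^sup>+ y. ennreal (mvn_density (B *v x 1 + b) \<Psi> y * exp (c \<bullet> y)) \<partial>lborel) \<partial>PiM {1::nat} (\<lambda>_. lborel))"
  proof (rule nn_integral_cong)
    fix x :: "nat \<Rightarrow> real^'d"
    have "(\<integral>\<^sup>+ y. ennreal (dens 2 m \<Phi> B b \<Psi> (x(2:=y)) * exp (a \<bullet> (x(2:=y)) 1 + c \<bullet> (x(2:=y)) 2)) \<partial>lborel)
      = (\<integral>\<^sup>+ y. ennreal (mvn_density m \<Phi> (x 1) * exp (a \<bullet> x 1)) * ennreal (mvn_density (B *v x 1 + b) \<Psi> y * exp (c \<bullet> y)) \<partial>lborel)"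
    proof (intro nn_integral_cong)
      fix y
      have "{1..<2::nat} = {1}" by auto
      then have "dens 2 m \<Phi> B b \<Psi> (x(2:=y)) * exp (a \<bullet> (x(2:=y)) 1 + c \<bullet> (x(2:=y)) 2)
         = (mvn_density m \<Phi> (x 1) * exp (a \<bullet> x 1)) * (mvn_density (B *v x 1 + b) \<Psi> y * exp (c \<bullet> y))"
        by (simp add: dens_def exp_add mult_ac)
      then show "ennreal (dens 2 m \<Phi> B b \<Psi> (x(2:=y)) * exp (a \<bullet> (x(2:=y)) 1 + c \<bullet> (x(2:=y)) 2))
         = ennreal (mvn_density m \<Phi> (x 1) * exp (a \<bullet> x 1)) * ennreal (mvn_density (B *v x 1 + b) \<Psi> y * exp (c \<bullet> y))"
        using mvn_nonneg[OF assms(1,2)] mvn_nonneg[OF assms(3,4)] by (simp add: ennreal_mult)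
    qed
    also have "\<dots> = ennreal (mvn_density m \<Phi> (x 1) * exp (a \<bullet> x 1)) * (\<integral>\<^sup>+ y. ennreal (mvn_density (B *v x 1 + b) \<Psi> y * exp (c \<bullet> y)) \<partial>lborel)"
      by (rule nn_integral_cmult) simp
    finally show "(\<integral>\<^sup>+ y. ennreal (dens 2 m \<Phi> B b \<Psi> (x(2:=y)) * exp (a \<bullet> (x(2:=y)) 1 + c \<bullet> (x(2:=y)) 2)) \<partial>lborel)
      = ennreal (mvn_density m \<Phi> (x 1) * exp (a \<bullet> x 1)) * (\<integral>\<^sup>+ y. ennreal (mvn_density (B *v x 1 + b) \<Psi> y * exp (c \<bullet> y)) \<partial>lborel)" .
  qed
  also have "\<dots> = (\<integral>\<^sup>+ x. ennreal (exp (c \<bullet> b + (\<Sum>i\<in>UNIV. \<Psi>$i$i * (c$i)\<^sup>2) / 2)) *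
        ennreal (mvn_density m \<Phi> (x 1) * exp ((a + c v* B) \<bullet> x 1)) \<partial>PiM {1::nat} (\<lambda>_. lborel))"
  proof (rule nn_integral_cong)
    fix x :: "nat \<Rightarrow> real^'d"
    have e: "\<And>z. exp (a \<bullet> z) * exp (c \<bullet> (B *v z + b) + (\<Sum>i\<in>UNIV. \<Psi>$i$i * (c$i)\<^sup>2) / 2)
      = exp (c \<bullet> b + (\<Sum>i\<in>UNIV. \<Psi>$i$i * (c$i)\<^sup>2) / 2) * exp ((a + c v* B) \<bullet> z)"
      by (simp add: exp_add[symmetric] inner_add_left inner_add_right dot_lmul_matrix algebra_simps)
    show "ennreal (mvn_density m \<Phi> (x 1) * exp (a \<bullet> x 1)) *
        (\<integral>\<^sup>+ y. ennreal (mvn_density (B *v x 1 + b) \<Psi> y * exp (c \<bullet> y)) \<partial>lborel) =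
        ennreal (exp (c \<bullet> b + (\<Sum>i\<in>UNIV. \<Psi>$i$i * (c$i)\<^sup>2) / 2)) *
        ennreal (mvn_density m \<Phi> (x 1) * exp ((a + c v* B) \<bullet> x 1))"
      unfolding mvn_mgf[OF assms(3,4)] using mvn_nonneg[OF assms(1,2)]
      by (simp add: ennreal_mult[symmetric] e mult_ac)
  qed
  also have "\<dots> = (\<integral>\<^sup>+ z. ennreal (exp (c \<bullet> b + (\<Sum>i\<in>UNIV. \<Psi>$i$i * (c$i)\<^sup>2) / 2)) *
        ennreal (mvn_density m \<Phi> z * exp ((a + c v* B) \<bullet> z)) \<partial>lborel)"
    by (rule P.product_nn_integral_singleton) simp
  also have "\<dots> = ennreal (exp (c \<bullet> b + (\<Sum>i\<in>UNIV. \<Psi>$i$i * (c$i)\<^sup>2) / 2)) *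
        (\<integral>\<^sup>+ z. ennreal (mvn_density m \<Phi> z * exp ((a + c v* B) \<bullet> z)) \<partial>lborel)"
    by (rule nn_integral_cmult) simp
  also have "\<dots> = ennreal (exp (mgfQ m \<Phi> B b \<Psi> a c))"
    unfolding mvn_mgf[OF assms(1,2)] mgfQ_def
    by (simp add: ennreal_mult[symmetric] exp_add[symmetric] algebra_simps)
  finally show ?case .
next
  case (step T)
  interpret P: product_sigma_finite "(\<lambda>_. lborel) :: nat \<Rightarrow> (real^'d) measure"
    by standard
  have [measurable]: "(\<lambda>s. s 1) \<in> borel_measurable (PiM {1..Suc T} (\<lambda>_. lborel :: (real^'d) measure))"
     "(\<lambda>s. s 2) \<in> borel_measurable (PiM {1..Suc T} (\<lambda>_. lborel :: (real^'d) measure))"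
    using step(1) by (auto intro!: comp_meas)
  have dm[measurable]: "dens (Suc T) m \<Phi> B b \<Psi> \<in> borel_measurable (PiM {1..Suc T} (\<lambda>_. lborel))"
    by (rule dens_meas) simp
  have I: "{1..Suc T} = insert (Suc T) {1..T}" by auto
  have mf: "(\<lambda>s. ennreal (dens (Suc T) m \<Phi> B b \<Psi> s * exp (a \<bullet> s 1 + c \<bullet> s 2))) \<in> borel_measurable (PiM {1..Suc T} (\<lambda>_. lborel))"
    by measurable
  have "(\<integral>\<^sup>+ s. ennreal (dens (Suc T) m \<Phi> B b \<Psi> s * exp (a \<bullet> s 1 + c \<bullet> s 2)) \<partial>PiM {1..Suc T} (\<lambda>_. lborel))
    = (\<integral>\<^sup>+ x. (\<integral>\<^sup>+ y. ennreal (dens (Suc T) m \<Phi> B b \<Psi> (x(Suc T:=y)) * exp (a \<bullet> (x(Suc T:=y)) 1 + c \<bullet> (x(Suc T:=y)) 2)) \<partial>lborel) \<partial>PiM {1..T} (\<lambda>_. lborel))"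
    using mf unfolding I by (intro P.product_nn_integral_insert) auto
  also have "\<dots> = (\<integral>\<^sup>+ x. ennreal (dens T m \<Phi> B b \<Psi> x * exp (a \<bullet> x 1 + c \<bullet> x 2)) \<partial>PiM {1..T} (\<lambda>_. lborel))"
  proof (rule nn_integral_cong)
    fix x :: "nat \<Rightarrow> real^'d"
    have "(\<integral>\<^sup>+ y. ennreal (dens (Suc T) m \<Phi> B b \<Psi> (x(Suc T:=y)) * exp (a \<bullet> (x(Suc T:=y)) 1 + c \<bullet> (x(Suc T:=y)) 2)) \<partial>lborel)
      = (\<integral>\<^sup>+ y. ennreal (dens T m \<Phi> B b \<Psi> x * exp (a \<bullet> x 1 + c \<bullet> x 2)) * ennreal (mvn_density (B *v x T + b) \<Psi> y) \<partial>lborel)"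
    proof (intro nn_integral_cong)
      fix y
      have J: "{1..<Suc T} = insert T {1..<T}" using step(1) by auto
      have 12: "(x(Suc T:=y)) 1 = x 1" "(x(Suc T:=y)) 2 = x 2" using step(1) by auto
      have "dens (Suc T) m \<Phi> B b \<Psi> (x(Suc T:=y)) = dens T m \<Phi> B b \<Psi> x * mvn_density (B *v x T + b) \<Psi> y"
        unfolding dens_def J using step(1) by (simp add: 12 mult_ac)
      moreover have "0 \<le> dens T m \<Phi> B b \<Psi> x"
        unfolding dens_def using mvn_nonneg[OF assms(1,2)] mvn_nonneg[OF assms(3,4)] by (simp add: prod_nonneg)
      ultimately show "ennreal (dens (Suc T) m \<Phi> B b \<Psi> (x(Suc T:=y)) * exp (a \<bullet> (x(Suc T:=y)) 1 + c \<bullet> (x(Suc T:=y)) 2))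
         = ennreal (dens T m \<Phi> B b \<Psi> x * exp (a \<bullet> x 1 + c \<bullet> x 2)) * ennreal (mvn_density (B *v x T + b) \<Psi> y)"
        using mvn_nonneg[OF assms(3,4)] step(1) by (simp add: ennreal_mult[symmetric] 12 mult_ac)
    qed
    also have "\<dots> = ennreal (dens T m \<Phi> B b \<Psi> x * exp (a \<bullet> x 1 + c \<bullet> x 2)) * (\<integral>\<^sup>+ y. ennreal (mvn_density (B *v x T + b) \<Psi> y) \<partial>lborel)"
      by (rule nn_integral_cmult) simp
    also have "\<dots> = ennreal (dens T m \<Phi> B b \<Psi> x * exp (a \<bullet> x 1 + c \<bullet> x 2))"
      using mvn_int1[OF assms(3,4)] by simp
    finally show "(\<integral>\<^sup>+ y. ennreal (dens (Suc T) m \<Phi> B b \<Psi> (x(Suc T:=y)) * exp (a \<bullet> (x(Suc T:=y)) 1 + c \<bullet> (x(Suc T:=y)) 2)) \<partial>lborel)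
      = ennreal (dens T m \<Phi> B b \<Psi> x * exp (a \<bullet> x 1 + c \<bullet> x 2))" .
  qed
  also have "\<dots> = ennreal (exp (mgfQ m \<Phi> B b \<Psi> a c))" by (rule step(3))
  finally show ?case .
qed

lemma obs_mgf:
  fixes m b :: "real^'d" and \<Phi> B \<Psi> :: "real^'d^'d" and \<Gamma> :: "real^'d^'k" and u v :: "real^'k"
  assumes "diag_mat \<Phi>" "\<forall>i. \<Phi> $ i $ i > 0" "diag_mat \<Psi>" "\<forall>i. \<Psi> $ i $ i > 0"
    and T: "2 \<le> T"
  shows "(\<integral>\<^sup>+ w. ennreal (exp (u \<bullet> w 1 + v \<bullet> w 2)) \<partial>obs_law T \<Gamma> m \<Phi> B b \<Psi>)
     = ennreal (exp (mgfQ m \<Phi> B b \<Psi> (u v* \<Gamma>) (v v* \<Gamma>)))"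
proof -
  have [measurable]: "(\<lambda>x. A *v x) \<in> borel_measurable borel" for A :: "real^'d^'k"
    by (intro borel_measurable_continuous_onI linear_continuous_on matrix_vector_mul_bounded_linear)
  have cm: "(\<lambda>s. s t) \<in> borel_measurable (PiM {1..T} (\<lambda>_. borel :: (real^'k) measure))" if "t \<in> {1..T}" for t
    using measurable_component_singleton[OF that, of "\<lambda>_. borel :: (real^'k) measure"] by simp
  have [measurable]: "(\<lambda>s. s 1) \<in> borel_measurable (PiM {1..T} (\<lambda>_. borel :: (real^'k) measure))"
    "(\<lambda>s. s 2) \<in> borel_measurable (PiM {1..T} (\<lambda>_. borel :: (real^'k) measure))"
    using T by (auto intro!: cm)
  have mp: "(\<lambda>s. \<lambda>t\<in>{1..T}. \<Gamma> *v s t) \<in> measurable (state_law T m \<Phi> B b \<Psi>) (PiM {1..T} (\<lambda>_. borel))"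
    unfolding state_law_def measurable_density_eq1
  proof (rule measurable_restrict)
    fix t assume "t \<in> {1..T}"
    then have [measurable]: "(\<lambda>s. s t) \<in> borel_measurable (PiM {1..T} (\<lambda>_. lborel :: (real^'d) measure))"
      by (rule comp_meas)
    show "(\<lambda>s. \<Gamma> *v s t) \<in> borel_measurable (PiM {1..T} (\<lambda>_. lborel :: (real^'d) measure))"
      by measurable
  qed
  have [measurable]: "(\<lambda>s. s 1) \<in> borel_measurable (PiM {1..T} (\<lambda>_. lborel :: (real^'d) measure))"
    "(\<lambda>s. s 2) \<in> borel_measurable (PiM {1..T} (\<lambda>_. lborel :: (real^'d) measure))"
    using T by (auto intro!: comp_meas)
  have dm[measurable]: "dens T m \<Phi> B b \<Psi> \<in> borel_measurable (PiM {1..T} (\<lambda>_. lborel))"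
    by (rule dens_meas) (use T in simp)
  have "(\<integral>\<^sup>+ w. ennreal (exp (u \<bullet> w 1 + v \<bullet> w 2)) \<partial>obs_law T \<Gamma> m \<Phi> B b \<Psi>)
     = (\<integral>\<^sup>+ s. ennreal (exp (u \<bullet> (\<Gamma> *v s 1) + v \<bullet> (\<Gamma> *v s 2))) \<partial>state_law T m \<Phi> B b \<Psi>)"
    unfolding obs_law_def using T by (subst nn_integral_distr[OF mp]) auto
  also have "\<dots> = (\<integral>\<^sup>+ s. ennreal (dens T m \<Phi> B b \<Psi> s) * ennreal (exp ((u v* \<Gamma>) \<bullet> s 1 + (v v* \<Gamma>) \<bullet> s 2)) \<partial>PiM {1..T} (\<lambda>_. lborel))"
  proof -
    have mg: "(\<lambda>s. ennreal (exp (u \<bullet> (\<Gamma> *v s 1) + v \<bullet> (\<Gamma> *v s 2)))) \<in> borel_measurable (PiM {1..T} (\<lambda>_. lborel))"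
      by measurable
    have md: "(\<lambda>s. ennreal (dens T m \<Phi> B b \<Psi> s)) \<in> borel_measurable (PiM {1..T} (\<lambda>_. lborel))"
      by measurable
    show ?thesis
      unfolding state_law_def dens_def[symmetric] nn_integral_density[OF md mg]
      by (simp add: dot_lmul_matrix)
  qed
  also have "\<dots> = (\<integral>\<^sup>+ s. ennreal (dens T m \<Phi> B b \<Psi> s * exp ((u v* \<Gamma>) \<bullet> s 1 + (v v* \<Gamma>) \<bullet> s 2)) \<partial>PiM {1..T} (\<lambda>_. lborel))"
  proof -
    have "0 \<le> dens T m \<Phi> B b \<Psi> s" for s
      unfolding dens_def using mvn_nonneg[OF assms(1,2)] mvn_nonneg[OF assms(3,4)] by (simp add: prod_nonneg)
    then show ?thesis by (intro nn_integral_cong) (simp add: ennreal_mult)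
  qed
  also have "\<dots> = ennreal (exp (mgfQ m \<Phi> B b \<Psi> (u v* \<Gamma>) (v v* \<Gamma>)))"
    by (rule chain_mgf[OF assms])
  finally show ?thesis .
qed



definition EE :: "real^'d \<Rightarrow> real^'d^'d \<Rightarrow> real^'d^'d \<Rightarrow> real^'d \<Rightarrow> real^'d^'d \<Rightarrow> real^'d \<Rightarrow> real^'d \<Rightarrow> real" where
  "EE m \<Phi> B b \<Psi> a c = (c \<bullet> b + (a + B *v c) \<bullet> m) + (c \<bullet> (\<Psi> *v c) + (a + B *v c) \<bullet> (\<Phi> *v (a + B *v c))) / 2"

lemma inner_mv: "((A::real^'n^'m) *v x) \<bullet> y = x \<bullet> (transpose A *v y)"
  by (metis dot_lmul_matrix inner_commute transpose_matrix_vector)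

lemma sym_inner: "transpose (A::real^'n^'n) = A \<Longrightarrow> x \<bullet> (A *v y) = y \<bullet> (A *v x)"
  by (metis inner_mv inner_commute)

lemma vec_ext: "(\<And>u. u \<bullet> p = u \<bullet> (q::real^'n)) \<Longrightarrow> p = q"
  by (metis inner_diff_left inner_eq_zero_iff right_minus_eq inner_commute)

lemma mat_ext: "(\<And>u w. u \<bullet> (P *v w) = u \<bullet> ((Q::real^'n^'m) *v w)) \<Longrightarrow> P = Q"
  by (metis matrix_eq vec_ext inner_commute)

lemma mv_neg: "(A::real^'n^'m) *v (- x) = - (A *v x)"
  by (simp add: matrix_vector_mult_def vec_eq_iff sum_negf)

lemma quad_conv: "((X::real^'k^'d) *v u) \<bullet> (P *v (X *v w)) = u \<bullet> ((transpose X ** P ** X) *v w)"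
  by (simp add: inner_mv matrix_vector_mul_assoc matrix_mul_assoc)

lemma quad_add:
  assumes "transpose (P::real^'n^'n) = P"
  shows "(x + y) \<bullet> (P *v (x + y)) = x \<bullet> (P *v x) + y \<bullet> (P *v y) + 2 * (x \<bullet> (P *v y))"
proof -
  have "y \<bullet> (P *v x) = x \<bullet> (P *v y)" by (rule sym_inner[OF assms])
  then show ?thesis by (simp add: matrix_vector_right_distrib inner_add_left inner_add_right)
qed

lemma extract_id:
  fixes X Y :: "real^'k^'d" and m b m' b' :: "real^'d" and \<Phi> B \<Psi> \<Phi>' B' \<Psi>' :: "real^'d^'d"
  assumes sF: "transpose \<Phi> = \<Phi>" and sP: "transpose \<Psi> = \<Psi>"
    and sF': "transpose \<Phi>' = \<Phi>'" and sP': "transpose \<Psi>' = \<Psi>'"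
    and H: "\<And>u v. EE m \<Phi> B b \<Psi> (X *v u) (X *v v) = EE m' \<Phi>' B' b' \<Psi>' (Y *v u) (Y *v v)"
  shows "transpose X *v m = transpose Y *v m'"
    and "transpose X *v (b + transpose B *v m) = transpose Y *v (b' + transpose B' *v m')"
    and "transpose X ** \<Phi> ** X = transpose Y ** \<Phi>' ** Y"
    and "transpose X ** (\<Psi> + transpose B ** \<Phi> ** B) ** X = transpose Y ** (\<Psi>' + transpose B' ** \<Phi>' ** B') ** Y"
    and "transpose X ** (\<Phi> ** B) ** X = transpose Y ** (\<Phi>' ** B') ** Y"
proof -
  define lin where "lin m b B a c = c \<bullet> b + (a + B *v c) \<bullet> m" for m b :: "real^'d" and B :: "real^'d^'d" and a c
  define qd where "qd \<Phi> \<Psi> B a c = c \<bullet> (\<Psi> *v c) + (a + B *v c) \<bullet> (\<Phi> *v (a + B *v c))" for \<Phi> \<Psi> B :: "real^'d^'d" and a c :: "real^'d"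
  have EEs: "EE m \<Phi> B b \<Psi> a c = lin m b B a c + qd \<Phi> \<Psi> B a c / 2" for m \<Phi> B b \<Psi> a c
    by (simp add: EE_def lin_def qd_def)
  have ln: "lin m b B (-a) (-c) = - lin m b B a c" for m b B a c
    by (simp add: lin_def mv_neg inner_minus_left inner_minus_right) (simp add: algebra_simps)
  have qn: "qd \<Phi> \<Psi> B (-a) (-c) = qd \<Phi> \<Psi> B a c" for \<Phi> \<Psi> B a c
    by (simp only: qd_def mv_neg minus_add_distrib[symmetric] inner_minus_left inner_minus_right minus_minus)
  have LQ: "lin m b B (X *v u) (X *v v) = lin m' b' B' (Y *v u) (Y *v v) \<and> qd \<Phi> \<Psi> B (X *v u) (X *v v) = qd \<Phi>' \<Psi>' B' (Y *v u) (Y *v v)" for u v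
  proof -
    have 1: "lin m b B (X *v u) (X *v v) + qd \<Phi> \<Psi> B (X *v u) (X *v v) / 2 = lin m' b' B' (Y *v u) (Y *v v) + qd \<Phi>' \<Psi>' B' (Y *v u) (Y *v v) / 2"
      using H[of u v] by (simp add: EEs)
    have 2: "- lin m b B (X *v u) (X *v v) + qd \<Phi> \<Psi> B (X *v u) (X *v v) / 2 = - lin m' b' B' (Y *v u) (Y *v v) + qd \<Phi>' \<Psi>' B' (Y *v u) (Y *v v) / 2"
      using H[of "-u" "-v"] by (simp add: EEs mv_neg ln qn)
    from 1 2 show ?thesis by linarith
  qed
  have pol: "qd \<Phi> \<Psi> B (a + a') (c + c') = qd \<Phi> \<Psi> B a c + qd \<Phi> \<Psi> B a' c' + 2 * (c \<bullet> (\<Psi> *v c') + (a + B *v c) \<bullet> (\<Phi> *v (a' + B *v c')))"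
    if "transpose \<Phi> = \<Phi>" "transpose \<Psi> = \<Psi>" for \<Phi> \<Psi> B a a' c c'
  proof -
    have e: "a + a' + B *v (c + c') = (a + B *v c) + (a' + B *v c')"
      by (simp add: matrix_vector_right_distrib algebra_simps)
    show ?thesis unfolding qd_def e quad_add[OF that(1)] quad_add[OF that(2)] by simp
  qed
  have BIL: "((X *v va) \<bullet> (\<Psi> *v (X *v vb)) + (X *v ua + B *v (X *v va)) \<bullet> (\<Phi> *v (X *v ub + B *v (X *v vb))))
      = ((Y *v va) \<bullet> (\<Psi>' *v (Y *v vb)) + (Y *v ua + B' *v (Y *v va)) \<bullet> (\<Phi>' *v (Y *v ub + B' *v (Y *v vb))))" for ua va ub vb
  proof -
    have "qd \<Phi> \<Psi> B (X *v (ua + ub)) (X *v (va + vb)) = qd \<Phi>' \<Psi>' B' (Y *v (ua + ub)) (Y *v (va + vb))"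
      using LQ by blast
    then have "qd \<Phi> \<Psi> B (X *v ua + X *v ub) (X *v va + X *v vb) = qd \<Phi>' \<Psi>' B' (Y *v ua + Y *v ub) (Y *v va + Y *v vb)"
      by (simp add: matrix_vector_right_distrib)
    then show ?thesis unfolding pol[OF sF sP] pol[OF sF' sP'] using LQ[of ua va] LQ[of ub vb] by simp
  qed
  show "transpose X *v m = transpose Y *v m'"
  proof (rule vec_ext)
    fix u show "u \<bullet> (transpose X *v m) = u \<bullet> (transpose Y *v m')"
      using LQ[of u 0] by (simp add: lin_def inner_mv)
  qed
  show "transpose X *v (b + transpose B *v m) = transpose Y *v (b' + transpose B' *v m')"
  proof (rule vec_ext)
    fix u show "u \<bullet> (transpose X *v (b + transpose B *v m)) = u \<bullet> (transpose Y *v (b' + transpose B' *v m'))"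
      using LQ[of 0 u] by (simp add: lin_def inner_mv matrix_vector_mul_assoc[symmetric] inner_add_right inner_add_left vector_matrix_left_distrib)
  qed
  show "transpose X ** \<Phi> ** X = transpose Y ** \<Phi>' ** Y"
  proof (rule mat_ext)
    fix u w show "u \<bullet> ((transpose X ** \<Phi> ** X) *v w) = u \<bullet> ((transpose Y ** \<Phi>' ** Y) *v w)"
    proof -
      have "(X *v u) \<bullet> (\<Phi> *v (X *v w)) = (Y *v u) \<bullet> (\<Phi>' *v (Y *v w))" using BIL[where ua=u and va=0 and ub=w and vb=0] by simp
      then show ?thesis by (simp only: quad_conv)
    qed
  qed
  show "transpose X ** (\<Psi> + transpose B ** \<Phi> ** B) ** X = transpose Y ** (\<Psi>' + transpose B' ** \<Phi>' ** B') ** Y"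
  proof (rule mat_ext)
    fix u w
    have e: "(Z *v u) \<bullet> (P *v (Z *v w)) + (B0 *v (Z *v u)) \<bullet> (F *v (B0 *v (Z *v w))) = u \<bullet> ((transpose Z ** (P + transpose B0 ** F ** B0) ** Z) *v w)"
      for Z :: "real^'k^'d" and P B0 F :: "real^'d^'d"
    proof -
      have 1: "(transpose Z ** (P + transpose B0 ** F ** B0) ** Z) *v w = transpose Z *v ((P + transpose B0 ** F ** B0) *v (Z *v w))"
        by (simp only: matrix_vector_mul_assoc matrix_mul_assoc)
      have 2: "(P + transpose B0 ** F ** B0) *v y = P *v y + transpose B0 *v (F *v (B0 *v y))" for y
        by (simp only: matrix_vector_mult_add_rdistrib matrix_vector_mul_assoc matrix_mul_assoc)
      show ?thesis unfolding 1 2 by (simp only: inner_mv[symmetric] inner_add_right)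
    qed
    show "u \<bullet> ((transpose X ** (\<Psi> + transpose B ** \<Phi> ** B) ** X) *v w) = u \<bullet> ((transpose Y ** (\<Psi>' + transpose B' ** \<Phi>' ** B') ** Y) *v w)"
    proof -
      have "(X *v u) \<bullet> (\<Psi> *v (X *v w)) + (B *v (X *v u)) \<bullet> (\<Phi> *v (B *v (X *v w))) = (Y *v u) \<bullet> (\<Psi>' *v (Y *v w)) + (B' *v (Y *v u)) \<bullet> (\<Phi>' *v (B' *v (Y *v w)))"
        using BIL[where ua=0 and va=u and ub=0 and vb=w] by simp
      then show ?thesis by (simp only: e)
    qed
  qed
  show "transpose X ** (\<Phi> ** B) ** X = transpose Y ** (\<Phi>' ** B') ** Y"
  proof (rule mat_ext)
    fix u w show "u \<bullet> ((transpose X ** (\<Phi> ** B) ** X) *v w) = u \<bullet> ((transpose Y ** (\<Phi>' ** B') ** Y) *v w)"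
    proof -
      have "(X *v u) \<bullet> ((\<Phi> ** B) *v (X *v w)) = (Y *v u) \<bullet> ((\<Phi>' ** B') *v (Y *v w))" using BIL[where ua=u and va=0 and ub=0 and vb=w] by (simp add: matrix_vector_mul_assoc matrix_mul_assoc)
      then show ?thesis by (simp only: quad_conv)
    qed
  qed
qed



lemma diag_transpose: "diag_mat (A::real^'n^'n) \<Longrightarrow> transpose A = A"
  unfolding diag_mat_def transpose_def vec_eq_iff by (metis vec_lambda_beta)

lemma diag_mul_left: "diag_mat (A::real^'n^'n) \<Longrightarrow> (A ** M) $ i $ j = A$i$i * M$i$j"
proof -
  assume d: "diag_mat A"
  have "(A ** M)$i$j = (\<Sum>k\<in>UNIV. A$i$k * M$k$j)" by (simp add: matrix_matrix_mult_def)
  also have "\<dots> = (\<Sum>k\<in>UNIV. if k = i then A$i$i * M$i$j else 0)"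
    by (rule sum.cong) (use d in \<open>auto simp: diag_mat_def\<close>)
  finally show ?thesis by simp
qed

lemma diag_mul_right: "diag_mat (A::real^'n^'n) \<Longrightarrow> (M ** A) $ i $ j = M$i$j * A$j$j"
proof -
  assume d: "diag_mat A"
  have "(M ** A)$i$j = (\<Sum>k\<in>UNIV. M$i$k * A$k$j)" by (simp add: matrix_matrix_mult_def)
  also have "\<dots> = (\<Sum>k\<in>UNIV. if k = j then M$i$j * A$j$j else 0)"
    by (rule sum.cong) (use d in \<open>auto simp: diag_mat_def\<close>)
  finally show ?thesis by simp
qed

lemma diag_inv_mult:
  fixes A :: "real^'n^'n"
  assumes "diag_mat A" "\<forall>i. A $ i $ i \<noteq> 0"
  shows "(\<chi> i j. if i = j then 1 / A $ i $ i else 0) ** A = mat 1"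
  using assms by (auto simp: diag_mat_def matrix_matrix_mult_def mat_def vec_eq_iff if_distrib[of "\<lambda>z. z * _"] cong: if_cong)

lemma cancel_sandwich:
  fixes L :: "real^'k^'d" and G :: "real^'d^'k" and M N :: "real^'d^'d"
  assumes "L ** G = mat 1" "G ** M ** transpose G = G ** N ** transpose G"
  shows "M = N"
proof -
  have t: "transpose G ** transpose L = mat 1" using assms(1) by (metis matrix_transpose_mul transpose_mat)
  have "M = (L ** G) ** M ** (transpose G ** transpose L)" using assms(1) t by simp
  also have "\<dots> = L ** (G ** M ** transpose G) ** transpose L" by (simp add: matrix_mul_assoc)
  also have "\<dots> = L ** (G ** N ** transpose G) ** transpose L" using assms(2) by simp
  also have "\<dots> = (L ** G) ** N ** (transpose G ** transpose L)" by (simp add: matrix_mul_assoc)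
  also have "\<dots> = N" using assms(1) t by simp
  finally show ?thesis .
qed

lemma cancel_vec:
  fixes L :: "real^'k^'d" and G :: "real^'d^'k"
  assumes "L ** G = mat 1" "G *v x = G *v y"
  shows "x = y"
  by (metis assms matrix_vector_mul_assoc matrix_vector_mul_lid)

lemma getC:
  fixes \<Gamma> \<Gamma>' :: "real^'d^'k" and \<Phi> \<Phi>' :: "real^'d^'d"
  assumes r: "rank \<Gamma> = CARD('d)" and r': "rank \<Gamma>' = CARD('d)"
    and e: "\<Gamma> ** \<Phi> ** transpose \<Gamma> = \<Gamma>' ** \<Phi>' ** transpose \<Gamma>'"
    and d': "diag_mat \<Phi>'" "\<forall>i. \<Phi>' $ i $ i \<noteq> 0"
  shows "\<exists>C Ci L. \<Gamma>' = \<Gamma> ** C \<and> Ci ** C = mat 1 \<and> L ** \<Gamma> = mat 1"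
proof -
  have injG: "inj ((*v) \<Gamma>)" using full_rank_injective[of \<Gamma>] r by simp
  have injG': "inj ((*v) \<Gamma>')" using full_rank_injective[of \<Gamma>'] r' by simp
  obtain L where L: "L ** \<Gamma> = mat 1"
    using matrix_left_invertible_injective[of \<Gamma>] injG by blast
  have sj: "surj ((*v) (transpose \<Gamma>'))"
    using r' by (simp add: full_rank_surjective[symmetric] rank_transpose del: transpose_matrix_vector)
  define Fi where "Fi = (\<chi> i j. if i = j then 1 / \<Phi>' $ i $ i else (0::real))"
  have Fi: "\<Phi>' ** Fi = mat 1"
    using diag_inv_mult[OF d'] matrix_left_right_inverse[of \<Phi>' Fi] unfolding Fi_def by simp
  define C where "C = L ** \<Gamma>'"
  have GC: "\<Gamma> ** C = \<Gamma>'"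
  proof (subst matrix_eq, intro allI)
    fix x
    obtain y where y: "Fi *v x = transpose \<Gamma>' *v y" using surjD[OF sj, of "Fi *v x"] by blast
    have "\<Gamma>' *v x = \<Gamma>' *v (\<Phi>' *v (Fi *v x))" using Fi by (simp add: matrix_vector_mul_assoc)
    also have "\<dots> = (\<Gamma>' ** \<Phi>' ** transpose \<Gamma>') *v y" unfolding y by (simp add: matrix_vector_mul_assoc matrix_mul_assoc del: transpose_matrix_vector)
    also have "\<dots> = \<Gamma> *v ((\<Phi> ** transpose \<Gamma>) *v y)" unfolding e[symmetric] by (simp add: matrix_vector_mul_assoc matrix_mul_assoc del: transpose_matrix_vector)
    finally have gx: "\<Gamma>' *v x = \<Gamma> *v ((\<Phi> ** transpose \<Gamma>) *v y)" .
    have "(\<Gamma> ** C) *v x = \<Gamma> *v (L *v (\<Gamma>' *v x))" by (simp add: C_def matrix_vector_mul_assoc)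
    also have "\<dots> = \<Gamma>' *v x"
    proof -
      have "L *v (\<Gamma> *v z) = z" for z using L by (simp add: matrix_vector_mul_assoc)
      then show ?thesis unfolding gx by simp
    qed
    finally show "(\<Gamma> ** C) *v x = \<Gamma>' *v x" .
  qed
  have "inj ((*v) C)"
  proof (rule injI)
    fix x y assume "C *v x = C *v y"
    then have "\<Gamma>' *v x = \<Gamma>' *v y" unfolding GC[symmetric] by (simp add: matrix_vector_mul_assoc[symmetric])
    then show "x = y" using injG' by (simp add: inj_eq)
  qed
  then obtain Ci where "Ci ** C = mat 1" using matrix_left_invertible_injective[of C] by blast
  then show ?thesis using GC L by blast
qed

lemma mv_axis: "((A::real^'n^'m) *v axis j 1) $ i = A $ i $ j"
  by (simp add: matrix_vector_mult_def axis_def if_distrib[of "\<lambda>z. _ * z"] cong: if_cong)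

lemma structC:
  fixes B B' C Ci :: "real^'d^'d"
  assumes dB: "diag_mat B" and dist: "\<forall>i j. i \<noteq> j \<longrightarrow> B $ i $ i \<noteq> B $ j $ j" and dB': "diag_mat B'"
    and BC: "B ** C = C ** B'" and Ci: "Ci ** C = mat 1"
  shows "\<exists>p. p permutes (UNIV::'d set) \<and> (\<forall>i j. C$i$j \<noteq> 0 \<longleftrightarrow> i = p j)"
proof -
  have injC: "inj ((*v) C)" using matrix_left_invertible_injective[of C] Ci by blast
  have ev: "C$i$j \<noteq> 0 \<Longrightarrow> B$i$i = B'$j$j" for i j
    using arg_cong[OF BC, of "\<lambda>M. M$i$j"] by (simp add: diag_mul_left[OF dB] diag_mul_right[OF dB'])
  have uq: "C$i$j \<noteq> 0 \<Longrightarrow> C$k$j \<noteq> 0 \<Longrightarrow> i = k" for i j k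
  proof (rule ccontr)
    assume a: "C$i$j \<noteq> 0" "C$k$j \<noteq> 0" and ik: "i \<noteq> k"
    then have "B$i$i \<noteq> B$k$k" using dist by blast
    then show False using ev[OF a(1)] ev[OF a(2)] by simp
  qed
  have ex: "\<exists>i. C$i$j \<noteq> 0" for j
  proof (rule ccontr)
    assume "\<not> ?thesis"
    then have "C *v axis j 1 = C *v 0" by (simp add: vec_eq_iff mv_axis)
    then have "axis j (1::real) = 0" by (simp only: inj_eq[OF injC])
    then have "axis j (1::real) $ j = 0 $ j" by simp
    then show False by (simp add: axis_def)
  qed
  define p where "p j = (SOME i. C$i$j \<noteq> 0)" for j
  have pj: "C$(p j)$j \<noteq> 0" for j unfolding p_def by (rule someI_ex[OF ex[of j]])
  have iff: "C$i$j \<noteq> 0 \<longleftrightarrow> i = p j" for i j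
  proof
    assume "C$i$j \<noteq> 0" then show "i = p j" using uq[OF _ pj[of j]] by blast
  next
    assume "i = p j" then show "C$i$j \<noteq> 0" using pj by simp
  qed
  have "inj p"
  proof (rule injI)
    fix j k assume pjk: "p j = p k"
    show "j = k"
    proof (rule ccontr)
      assume jk: "j \<noteq> k"
      define z where "z = C$(p j)$k *s axis j (1::real) - C$(p j)$j *s axis k 1"
      have "z $ j \<noteq> 0" using jk pj[of k] pjk by (simp add: z_def axis_def)
      then have z0: "z \<noteq> 0" by auto
      have "C *v z = 0"
      proof -
        have "(C *v z) $ i = 0" for i
        proof -
          have "(C *v z) $ i = C$(p j)$k * C$i$j - C$(p j)$j * C$i$k"
            by (simp add: z_def scalar_mult_eq_scaleR matrix_vector_mult_diff_distrib matrix_vector_mult_scaleR mv_axis mult.commute)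
          also have "\<dots> = 0"
          proof (cases "i = p j")
            case True then show ?thesis by simp
          next
            case False
            then have "C$i$j = 0" "C$i$k = 0" using iff[of i j] iff[of i k] pjk by auto
            then show ?thesis by simp
          qed
          finally show ?thesis .
        qed
        then show ?thesis by (simp add: vec_eq_iff)
      qed
      then have "C *v z = C *v 0" by simp
      then have "z = 0" by (simp only: inj_eq[OF injC])
      then show False using z0 by simp
    qed
  qed
  then have "p permutes UNIV" by (intro inj_imp_permutes) auto
  then show ?thesis using iff by blast
qed

lemma matrix_add_rdistrib': "((A::real^'n^'m) + B) ** C = A ** C + B ** C"
  by (simp add: matrix_matrix_mult_def vec_eq_iff sum.distrib algebra_simps)

lemma alg_final:
  fixes \<Gamma> \<Gamma>' :: "real^'d^'k"
    and m b m' b' :: "real^'d"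
    and \<Phi> B \<Psi> \<Phi>' B' \<Psi>' :: "real^'d^'d"
  assumes dB: "diag_mat B" and distB: "\<forall>i j. i \<noteq> j \<longrightarrow> B $ i $ i \<noteq> B $ j $ j"
    and dF: "diag_mat \<Phi>" and dP: "diag_mat \<Psi>"
    and rG: "rank \<Gamma> = CARD('d)"
    and dB': "diag_mat B'"
    and dF': "diag_mat \<Phi>'" "\<forall>i. \<Phi>' $ i $ i > 0"
    and dP': "diag_mat \<Psi>'"
    and rG': "rank \<Gamma>' = CARD('d)"
    and H: "\<And>u v. EE m \<Phi> B b \<Psi> (transpose \<Gamma> *v u) (transpose \<Gamma> *v v) = EE m' \<Phi>' B' b' \<Psi>' (transpose \<Gamma>' *v u) (transpose \<Gamma>' *v v)"
  shows "\<exists>P D. perm_mat P \<and> diag_mat D \<and> invertible D \<and>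
           \<Gamma>' = \<Gamma> ** P ** matrix_inv D \<and>
           B' = D ** transpose P ** B ** P ** matrix_inv D \<and>
           \<Phi>' = D ** transpose P ** \<Phi> ** P ** D \<and>
           \<Psi>' = D ** transpose P ** \<Psi> ** P ** D \<and>
           b' = (D ** transpose P) *v b \<and>
           m' = (D ** transpose P) *v m"
proof -
  note tB = diag_transpose[OF dB] and tF = diag_transpose[OF dF] and tP = diag_transpose[OF dP]
  note tB' = diag_transpose[OF dB'] and tF' = diag_transpose[OF dF'(1)] and tP' = diag_transpose[OF dP']
  note ex = extract_id[where X="transpose \<Gamma>" and Y="transpose \<Gamma>'", OF tF tP tF' tP' H]
  have nzF': "\<forall>i. \<Phi>' $ i $ i \<noteq> 0" using dF'(2) by (metis less_irrefl)
  obtain C Ci L where GC: "\<Gamma>' = \<Gamma> ** C" and Ci: "Ci ** C = mat 1" and L: "L ** \<Gamma> = mat 1"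
  proof -
    have e3: "\<Gamma> ** \<Phi> ** transpose \<Gamma> = \<Gamma>' ** \<Phi>' ** transpose \<Gamma>'" using ex(3) by simp
    show ?thesis using getC[OF rG rG' e3 dF'(1) nzF'] that by blast
  qed
  have tG': "transpose \<Gamma>' = transpose C ** transpose \<Gamma>" by (simp add: GC matrix_transpose_mul)
  have sw: "\<Gamma>' ** M ** transpose \<Gamma>' = \<Gamma> ** (C ** M ** transpose C) ** transpose \<Gamma>" for M
    unfolding tG' by (simp add: GC matrix_mul_assoc)
  have F1: "\<Phi> = C ** \<Phi>' ** transpose C"
    by (rule cancel_sandwich[OF L]) (use ex(3) sw[of \<Phi>'] in simp)
  have F2: "\<Psi> + B ** \<Phi> ** B = C ** (\<Psi>' + B' ** \<Phi>' ** B') ** transpose C"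
    by (rule cancel_sandwich[OF L]) (use ex(4) sw[of "\<Psi>' + B' ** \<Phi>' ** B'"] tB tB' in simp)
  have F3: "\<Phi> ** B = C ** (\<Phi>' ** B') ** transpose C"
    by (rule cancel_sandwich[OF L]) (use ex(5) sw[of "\<Phi>' ** B'"] in simp)
  have M1: "m = C *v m'"
    by (rule cancel_vec[OF L]) (use ex(1) in \<open>simp add: GC matrix_vector_mul_assoc\<close>)
  have M2: "b + B *v m = C *v (b' + B' *v m')"
    by (rule cancel_vec[OF L]) (use ex(2) tB tB' in \<open>simp add: GC matrix_vector_mul_assoc del: transpose_matrix_vector\<close>)
  define Fi where "Fi = (\<chi> i j. if i = j then 1 / \<Phi>' $ i $ i else (0::real))"
  have Fi: "Fi ** \<Phi>' = mat 1" unfolding Fi_def by (rule diag_inv_mult[OF dF'(1) nzF'])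
  have cc: "X ** Ci ** C = X" for X by (metis Ci matrix_mul_assoc matrix_mul_rid)
  have "transpose C ** B = Fi ** Ci ** (\<Phi> ** B)"
    unfolding F1 by (simp add: matrix_mul_assoc cc Fi)
  also have "\<dots> = B' ** transpose C"
    unfolding F3 by (simp add: matrix_mul_assoc cc Fi)
  finally have "transpose (transpose C ** B) = transpose (B' ** transpose C)" by simp
  then have BC: "B ** C = C ** B'" by (simp add: matrix_transpose_mul tB tB')
  obtain p where p: "p permutes (UNIV::'d set)" and iff: "\<forall>i j. C$i$j \<noteq> 0 \<longleftrightarrow> i = p j"
    using structC[OF dB distB dB' BC Ci] by blast
  have injp: "p i = p j \<longleftrightarrow> i = j" for i j using p by (metis permutes_inj injD)
  define P :: "real^'d^'d" where "P = (\<chi> i j. if i = p j then 1 else 0)"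
  define D :: "real^'d^'d" where "D = (\<chi> i j. if i = j then 1 / C$(p j)$j else 0)"
  have dD: "diag_mat D" by (simp add: D_def diag_mat_def)
  have nzD: "\<forall>i. D $ i $ i \<noteq> 0" using iff by (simp add: D_def)
  have Dinv: "matrix_inv D = (\<chi> i j. if i = j then C$(p j)$j else 0)"
    unfolding diag_inv[OF dD nzD] vec_eq_iff by (simp add: D_def)
  have invD: "invertible D"
  proof -
    have "matrix_inv D ** D = mat 1" unfolding diag_inv[OF dD nzD] by (rule diag_inv_mult[OF dD nzD])
    then show ?thesis unfolding invertible_def by (metis matrix_left_right_inverse)
  qed
  have pm: "perm_mat P" unfolding perm_mat_def P_def using p by blast
  have Cdec: "C = P ** matrix_inv D"
  proof -
    have dDi: "diag_mat (matrix_inv D)" by (simp add: Dinv diag_mat_def)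
    have "C$i$j = (P ** matrix_inv D)$i$j" for i j
    proof -
      have "(P ** matrix_inv D)$i$j = P$i$j * (matrix_inv D)$j$j" by (rule diag_mul_right[OF dDi])
      also have "\<dots> = (if i = p j then C$(p j)$j else 0)" by (simp add: Dinv P_def)
      also have "\<dots> = C$i$j" using iff[rule_format, of i j] by auto
      finally show ?thesis by simp
    qed
    then show ?thesis by (simp add: vec_eq_iff)
  qed
  define K where "K = D ** transpose P"
  have KC: "K ** C = mat 1"
  proof -
    have PC: "(transpose P ** C) $ i $ j = C$(p i)$j" for i j
      by (simp add: P_def transpose_def matrix_matrix_mult_def if_distrib[of "\<lambda>z. z * _"] cong: if_cong)
    have "(K ** C)$i$j = (mat 1 :: real^'d^'d)$i$j" for i j
    proof -
      have "(K ** C)$i$j = (D ** (transpose P ** C))$i$j" by (simp add: K_def matrix_mul_assoc)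
      also have "\<dots> = D$i$i * (transpose P ** C)$i$j" by (rule diag_mul_left[OF dD])
      also have "\<dots> = C$(p i)$j / C$(p i)$i" by (simp add: PC D_def)
      also have "\<dots> = (mat 1 :: real^'d^'d)$i$j"
        using iff[rule_format, of "p i" i] iff[rule_format, of "p i" j] injp[of i j] by (auto simp: mat_def)
      finally show ?thesis .
    qed
    then show ?thesis by (simp add: vec_eq_iff)
  qed
  have kc: "X ** K ** C = X" for X by (metis KC matrix_mul_assoc matrix_mul_rid)
  have KT: "transpose K = P ** D" by (simp add: K_def matrix_transpose_mul diag_transpose[OF dD])
  have ctkt: "X ** transpose C ** transpose K = X" for X
    by (metis KC matrix_mul_assoc matrix_mul_rid matrix_transpose_mul transpose_mat)
  have G: "\<Gamma>' = \<Gamma> ** P ** matrix_inv D" by (simp add: GC Cdec matrix_mul_assoc)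
  have B': "B' = D ** transpose P ** B ** P ** matrix_inv D"
  proof -
    have "D ** transpose P ** B ** P ** matrix_inv D = K ** (B ** C)" by (simp add: K_def Cdec matrix_mul_assoc)
    also have "\<dots> = B'" by (simp add: BC matrix_mul_assoc kc KC)
    finally show ?thesis by simp
  qed
  have sand: "X = K ** (C ** X ** transpose C) ** transpose K" for X
    by (simp add: matrix_mul_assoc kc ctkt KC)
  have F': "\<Phi>' = D ** transpose P ** \<Phi> ** P ** D"
    using sand[of \<Phi>'] unfolding F1[symmetric] KT by (simp add: K_def matrix_mul_assoc)
  have Psi: "\<Psi> = C ** \<Psi>' ** transpose C"
  proof -
    have "C ** (B' ** \<Phi>' ** B') ** transpose C = B ** \<Phi> ** B"
    proof -
      have "C ** (B' ** \<Phi>' ** B') ** transpose C = (C ** B') ** \<Phi>' ** transpose (C ** B')"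
        by (simp add: matrix_transpose_mul tB' matrix_mul_assoc)
      also have "\<dots> = B ** (C ** \<Phi>' ** transpose C) ** B"
        by (simp add: BC[symmetric] matrix_transpose_mul tB matrix_mul_assoc)
      finally show ?thesis by (simp add: F1)
    qed
    then have "\<Psi> + B ** \<Phi> ** B = C ** \<Psi>' ** transpose C + B ** \<Phi> ** B"
      using F2 by (simp add: matrix_add_ldistrib matrix_add_rdistrib')
    then show ?thesis by simp
  qed
  have P': "\<Psi>' = D ** transpose P ** \<Psi> ** P ** D"
    using sand[of \<Psi>'] unfolding Psi[symmetric] KT by (simp add: K_def matrix_mul_assoc)
  have bC: "b = C *v b'"
  proof -
    have "b + B *v m = C *v b' + (C ** B') *v m'" using M2 by (simp add: matrix_vector_right_distrib matrix_vector_mul_assoc)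
    also have "\<dots> = C *v b' + B *v m" by (simp add: BC[symmetric] M1 matrix_vector_mul_assoc)
    finally show ?thesis by simp
  qed
  have b'': "b' = (D ** transpose P) *v b"
    by (simp add: bC matrix_vector_mul_assoc K_def[symmetric] KC)
  have m'': "m' = (D ** transpose P) *v m"
    by (simp add: M1 matrix_vector_mul_assoc K_def[symmetric] KC)
  show ?thesis using pm dD invD G B' F' P' b'' m'' by blast
qed


lemma quad_diag:
  assumes "diag_mat (A::real^'n^'n)"
  shows "(\<Sum>i\<in>UNIV. A$i$i * (x$i)\<^sup>2) = x \<bullet> (A *v x)"
proof -
  have r: "(A *v x)$i = A$i$i * x$i" for i
  proof -
    have "(A *v x)$i = (\<Sum>k\<in>UNIV. A$i$k * x$k)" by (simp add: matrix_vector_mult_def)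
    also have "\<dots> = (\<Sum>k\<in>UNIV. if k = i then A$i$i * x$i else 0)"
      by (rule sum.cong) (use assms in \<open>auto simp: diag_mat_def\<close>)
    finally show ?thesis by simp
  qed
  show ?thesis by (simp add: inner_vec_def r power2_eq_square mult_ac)
qed

lemma mgfQ_EE:
  fixes \<Phi> B \<Psi> :: "real^'d^'d"
  assumes "diag_mat \<Phi>" "diag_mat B" "diag_mat \<Psi>"
  shows "mgfQ m \<Phi> B b \<Psi> a c = EE m \<Phi> B b \<Psi> a c"
proof -
  have cB: "c v* B = B *v c" using diag_transpose[OF assms(2)] by (metis transpose_matrix_vector)
  show ?thesis unfolding mgfQ_def EE_def cB quad_diag[OF assms(1)] quad_diag[OF assms(3)]
    by (simp add: algebra_simps add_divide_distrib)
qed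

theorem mainTheorem7:
  fixes T :: nat
    and \<Gamma> \<Gamma>' :: "real^'d^'k"
    and m b m' b' :: "real^'d"
    and \<Phi> B \<Psi> \<Phi>' B' \<Psi>' :: "real^'d^'d"
  assumes "CARD('d) \<le> CARD('k)"
    and "T \<ge> 2"
    and "diag_mat B" "\<forall>i. B $ i $ i \<noteq> 0" "\<forall>i j. i \<noteq> j \<longrightarrow> B $ i $ i \<noteq> B $ j $ j"
    and "diag_mat \<Phi>" "\<forall>i. \<Phi> $ i $ i > 0"
    and "diag_mat \<Psi>" "\<forall>i. \<Psi> $ i $ i > 0"
    and "rank \<Gamma> = CARD('d)"
    and "diag_mat B'" "\<forall>i. B' $ i $ i \<noteq> 0"
    and "diag_mat \<Phi>'" "\<forall>i. \<Phi>' $ i $ i > 0"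
    and "diag_mat \<Psi>'" "\<forall>i. \<Psi>' $ i $ i > 0"
    and "rank \<Gamma>' = CARD('d)"
    and "obs_law T \<Gamma> m \<Phi> B b \<Psi> = obs_law T \<Gamma>' m' \<Phi>' B' b' \<Psi>'"
  shows "\<exists>P D. perm_mat P \<and> diag_mat D \<and> invertible D \<and>
           \<Gamma>' = \<Gamma> ** P ** matrix_inv D \<and>
           B' = D ** transpose P ** B ** P ** matrix_inv D \<and>
           \<Phi>' = D ** transpose P ** \<Phi> ** P ** D \<and>
           \<Psi>' = D ** transpose P ** \<Psi> ** P ** D \<and>
           b' = (D ** transpose P) *v b \<and>
           m' = (D ** transpose P) *v m"
  proof -
  have key: "EE m \<Phi> B b \<Psi> (transpose \<Gamma> *v u) (transpose \<Gamma> *v v) = EE m' \<Phi>' B' b' \<Psi>' (transpose \<Gamma>' *v u) (transpose \<Gamma>' *v v)" for u v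
  proof -
    have "ennreal (exp (mgfQ m \<Phi> B b \<Psi> (u v* \<Gamma>) (v v* \<Gamma>))) = ennreal (exp (mgfQ m' \<Phi>' B' b' \<Psi>' (u v* \<Gamma>') (v v* \<Gamma>')))"
      using obs_mgf[OF assms(6,7,8,9,2), of \<Gamma> m B b u v] obs_mgf[OF assms(13,14,15,16,2), of \<Gamma>' m' B' b' u v] assms(18) by simp
    then have "mgfQ m \<Phi> B b \<Psi> (u v* \<Gamma>) (v v* \<Gamma>) = mgfQ m' \<Phi>' B' b' \<Psi>' (u v* \<Gamma>') (v v* \<Gamma>')"
      by simp
    then show ?thesis
      using mgfQ_EE[OF assms(6,3,8)] mgfQ_EE[OF assms(13,11,15)] by simp
  qed
  show ?thesis
    by (rule alg_final[OF assms(3,5,6,8,10,11,13,14,15,17) key])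
qed

end
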